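(* Let $G$ be a group with a split $BN$-pair $(H,U,N)$ whose Weyl group is $W=N/H=\{1,s_1\}$. Let $n_1\in N$ with $s_1=n_1H$, let $U^-:=U^{n_1}$, $(U^-)^*:=U^-\setminus\{1\}$, and \[ \widetilde H:=\{h\in H:\ \exists\, u^-\in (U^-)^*\text{ with } Uu^-U=Un_1hU\}. \] Then the following are equivalent: (a) $(U^-)^*\cap Un_1hU\neq\emptyset$ for all $h\in H$ (equivalently, $\widetilde H=H$); (b) $U(U^-)^*U=Un_1HU$; (c) $G=(UU^-)^2=UU^-UU^-$.
   Context: A split $BN$-pair $(H,U,N)$ for $G$ means $B=H\ltimes U$ and $N$ satisfy the axioms of split $BN$-pairs (as in Carter, Finite Groups of Lie Type, \S 2.5) with $H=B\cap N$. Here $s_1$ is the longest element of $W$, so $U^{-}=U^{n_1}$ is the opposite unipotent subgroup. Products of subsets are setwise. *)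

theory Defs
  imports "HOL-Algebra.Algebra"
begin

text \<open>BN-pair (Tits system) in the sense of Carter, Finite Groups of Lie Type, 2.5:
  B, N subgroups generating G, H = B \<inter> N normal in N, and W = N/H generated by
  involutions w_i = r_i H (r_i \<in> R \<subseteq> N) such that r_i B r_i^{-1} \<noteq> B and
  r_i B n \<subseteq> BnB \<union> B r_i n B for all n \<in> N.\<close>

definition BN_pair :: "('a, 'b) monoid_scheme \<Rightarrow> 'a set \<Rightarrow> 'a set \<Rightarrow> bool" where
  "BN_pair G B N \<longleftrightarrow>
     group G \<and> subgroup B G \<and> subgroup N G \<and>
     generate G (B \<union> N) = carrier G \<and>
     (B \<inter> N) \<lhd> (G\<lparr>carrier := N\<rparr>) \<and>
     (\<exists>R. R \<subseteq> N \<and> generate G (R \<union> (B \<inter> N)) = N \<and>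
        (\<forall>r\<in>R. r \<notin> B \<inter> N \<and> r \<otimes>\<^bsub>G\<^esub> r \<in> B \<inter> N \<and>
           r <#\<^bsub>G\<^esub> B #>\<^bsub>G\<^esub> inv\<^bsub>G\<^esub> r \<noteq> B \<and>
           (\<forall>n\<in>N. r <#\<^bsub>G\<^esub> (B #>\<^bsub>G\<^esub> n) \<subseteq>
                (B #>\<^bsub>G\<^esub> n <#>\<^bsub>G\<^esub> B) \<union>
                (B #>\<^bsub>G\<^esub> (r \<otimes>\<^bsub>G\<^esub> n) <#>\<^bsub>G\<^esub> B))))"

definition split_BN_pair :: "('a, 'b) monoid_scheme \<Rightarrow> 'a set \<Rightarrow> 'a set \<Rightarrow> 'a set \<Rightarrow> bool" where
  "split_BN_pair G H U N \<longleftrightarrow>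
     BN_pair G (H <#>\<^bsub>G\<^esub> U) N \<and>
     subgroup H G \<and> subgroup U G \<and>
     U \<lhd> (G\<lparr>carrier := H <#>\<^bsub>G\<^esub> U\<rparr>) \<and>
     H \<inter> U = {\<one>\<^bsub>G\<^esub>} \<and>
     H = (H <#>\<^bsub>G\<^esub> U) \<inter> N \<and>
     (\<Inter>n\<in>N. n <#\<^bsub>G\<^esub> (H <#>\<^bsub>G\<^esub> U) #>\<^bsub>G\<^esub> inv\<^bsub>G\<^esub> n) = H"

end

theory Submission imports Defs begin
context group begin
lemma inv_cancel1 [simp]: "x \<in> carrier G \<Longrightarrow> y \<in> carrier G \<Longrightarrow> inv x \<otimes> (x \<otimes> y) = y"
  by (simp add: m_assoc[symmetric])
lemma inv_cancel2 [simp]: "x \<in> carrier G \<Longrightarrow> y \<in> carrier G \<Longrightarrow> x \<otimes> (inv x \<otimes> y) = y"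
  by (simp add: m_assoc[symmetric])
lemma mem_rcos: "x \<in> A #> a \<longleftrightarrow> (\<exists>y\<in>A. x = y \<otimes> a)" by (auto simp: r_coset_def)
lemma mem_lcos: "x \<in> a <# A \<longleftrightarrow> (\<exists>y\<in>A. x = a \<otimes> y)" by (auto simp: l_coset_def)
lemma mem_smult: "x \<in> A <#> C \<longleftrightarrow> (\<exists>a\<in>A. \<exists>c\<in>C. x = a \<otimes> c)" by (auto simp: set_mult_def)

lemma core:
  assumes sH: "subgroup H G" and sU: "subgroup U G" and sB: "subgroup (H <#> U) G"
  and hU: "\<forall>k\<in>H. \<forall>u\<in>U. k \<otimes> u \<otimes> inv k \<in> U"
  and HU: "H \<inter> U = {\<one>}"
  and n1: "n1 \<in> carrier G" and n1B: "n1 \<notin> H <#> U"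
  and nH1: "\<forall>k\<in>H. inv n1 \<otimes> k \<otimes> n1 \<in> H" and nH2: "\<forall>k\<in>H. n1 \<otimes> k \<otimes> inv n1 \<in> H"
  and UmB: "\<forall>u\<in>U. inv n1 \<otimes> u \<otimes> n1 \<in> H <#> U \<longrightarrow> u = \<one>"
  and bruhat: "\<forall>g\<in>carrier G. g \<in> H <#> U \<or> (\<exists>a\<in>U. \<exists>k\<in>H. \<exists>b\<in>U. g = a \<otimes> n1 \<otimes> k \<otimes> b)"
  and Um_def: "Um = inv n1 <# U #> n1"
  shows "((\<forall>h\<in>H. (Um - {\<one>}) \<inter> (U #> (n1 \<otimes> h) <#> U) \<noteq> {})
           \<longleftrightarrow> U <#> (Um - {\<one>}) <#> U = U #> n1 <#> H <#> U)
       \<and> (U <#> (Um - {\<one>}) <#> U = U #> n1 <#> H <#> U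
           \<longleftrightarrow> carrier G = U <#> Um <#> U <#> Um)"
proof -
  have Hc: "\<And>k. k \<in> H \<Longrightarrow> k \<in> carrier G" by (rule subgroup.mem_carrier[OF sH])
  have Uc: "\<And>k. k \<in> U \<Longrightarrow> k \<in> carrier G" by (rule subgroup.mem_carrier[OF sU])
  have memUm: "\<And>x. x \<in> Um \<longleftrightarrow> (\<exists>u\<in>U. x = inv n1 \<otimes> u \<otimes> n1)"
    unfolding Um_def by (force simp: r_coset_def l_coset_def)
  have Umc: "\<And>x. x \<in> Um \<Longrightarrow> x \<in> carrier G" using memUm Uc n1 by auto
  have memB: "\<And>x. x \<in> H <#> U \<longleftrightarrow> (\<exists>k\<in>H. \<exists>u\<in>U. x = k \<otimes> u)" by (rule mem_smult)
  have UB: "\<And>u. u \<in> U \<Longrightarrow> u \<in> H <#> U" using memB sH Uc subgroup.one_closed by fastforce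
  have HB: "\<And>k. k \<in> H \<Longrightarrow> k \<in> H <#> U" using memB sU Hc subgroup.one_closed by fastforce
  have S1: "\<And>x h. x \<in> U #> (n1 \<otimes> h) <#> U \<longleftrightarrow> (\<exists>a\<in>U. \<exists>b\<in>U. x = a \<otimes> (n1 \<otimes> h) \<otimes> b)"
    unfolding mem_smult Bex_def mem_rcos by blast
  have S2: "\<And>x. x \<in> U <#> (Um - {\<one>}) <#> U \<longleftrightarrow> (\<exists>a\<in>U. \<exists>v\<in>Um - {\<one>}. \<exists>b\<in>U. x = a \<otimes> v \<otimes> b)"
    unfolding mem_smult Bex_def by blast
  have S3: "\<And>x. x \<in> U #> n1 <#> H <#> U \<longleftrightarrow> (\<exists>a\<in>U. \<exists>k\<in>H. \<exists>b\<in>U. x = a \<otimes> n1 \<otimes> k \<otimes> b)"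
    unfolding mem_smult Bex_def mem_rcos by blast
  have S4: "\<And>x. x \<in> U <#> Um <#> U <#> Um \<longleftrightarrow> (\<exists>a\<in>U. \<exists>v\<in>Um. \<exists>b\<in>U. \<exists>w\<in>Um. x = a \<otimes> v \<otimes> b \<otimes> w)"
    unfolding mem_smult Bex_def by blast

  have Bc: "\<And>x. x \<in> H <#> U \<Longrightarrow> x \<in> carrier G" by (rule subgroup.mem_carrier[OF sB])
  have Bm: "\<And>x y. x \<in> H <#> U \<Longrightarrow> y \<in> H <#> U \<Longrightarrow> x \<otimes> y \<in> H <#> U" by (rule subgroup.m_closed[OF sB])
  have Bi: "\<And>x. x \<in> H <#> U \<Longrightarrow> inv x \<in> H <#> U" by (rule subgroup.m_inv_closed[OF sB])
  have Ui: "\<And>x. x \<in> U \<Longrightarrow> inv x \<in> U" by (rule subgroup.m_inv_closed[OF sU])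
  have Um': "\<And>x y. x \<in> U \<Longrightarrow> y \<in> U \<Longrightarrow> x \<otimes> y \<in> U" by (rule subgroup.m_closed[OF sU])
  have U1: "\<one> \<in> U" by (rule subgroup.one_closed[OF sU])
  have nonB: "\<And>v. v \<in> Um \<Longrightarrow> v \<noteq> \<one> \<Longrightarrow> v \<notin> H <#> U"
    using memUm UmB by (metis Uc inv_closed l_inv n1 r_one m_assoc)
  have L1: "\<And>v. v \<in> Um - {\<one>} \<Longrightarrow> \<exists>a\<in>U. \<exists>k\<in>H. \<exists>b\<in>U. v = a \<otimes> n1 \<otimes> k \<otimes> b"
    using nonB bruhat Umc by blast
  have sub23: "U <#> (Um - {\<one>}) <#> U \<subseteq> U #> n1 <#> H <#> U"
  proof
    fix x assume "x \<in> U <#> (Um - {\<one>}) <#> U"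
    then obtain a v b where ab: "a \<in> U" "b \<in> U" and v: "v \<in> Um - {\<one>}" and x: "x = a \<otimes> v \<otimes> b"
      using S2 by blast
    obtain a' k b' where "a' \<in> U" "k \<in> H" "b' \<in> U" and v': "v = a' \<otimes> n1 \<otimes> k \<otimes> b'" using L1[OF v] by blast
    moreover have "x = (a \<otimes> a') \<otimes> n1 \<otimes> k \<otimes> (b' \<otimes> b)"
      using x v' ab \<open>a' \<in> U\<close> \<open>b' \<in> U\<close> \<open>k \<in> H\<close> Uc Hc n1 by (simp add: m_assoc)
    moreover have "a \<otimes> a' \<in> U" using Um'[OF ab(1) \<open>a' \<in> U\<close>] .
    moreover have "b' \<otimes> b \<in> U" using Um'[OF \<open>b' \<in> U\<close> ab(2)] .
    ultimately show "x \<in> U #> n1 <#> H <#> U" unfolding S3 by blast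
  qed
  have P1: "(\<forall>h\<in>H. (Um - {\<one>}) \<inter> (U #> (n1 \<otimes> h) <#> U) \<noteq> {})
           \<longleftrightarrow> U <#> (Um - {\<one>}) <#> U = U #> n1 <#> H <#> U"
  proof
    assume A: "\<forall>h\<in>H. (Um - {\<one>}) \<inter> (U #> (n1 \<otimes> h) <#> U) \<noteq> {}"
    have "U #> n1 <#> H <#> U \<subseteq> U <#> (Um - {\<one>}) <#> U"
    proof
      fix x assume "x \<in> U #> n1 <#> H <#> U"
      then obtain a k b where akb: "a \<in> U" "k \<in> H" "b \<in> U" and x: "x = a \<otimes> n1 \<otimes> k \<otimes> b" using S3 by blast
      obtain v where v: "v \<in> Um - {\<one>}" "v \<in> U #> (n1 \<otimes> k) <#> U" using A akb by blast
      then obtain a' b' where ab': "a' \<in> U" "b' \<in> U" and v': "v = a' \<otimes> (n1 \<otimes> k) \<otimes> b'" using S1 by blast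
      have xe: "x = (a \<otimes> inv a') \<otimes> v \<otimes> (inv b' \<otimes> b)"
        using x v' akb ab' Uc Hc n1 by (simp add: m_assoc)
      have m1: "a \<otimes> inv a' \<in> U" using Um'[OF akb(1) Ui[OF ab'(1)]] .
      have m2: "inv b' \<otimes> b \<in> U" using Um'[OF Ui[OF ab'(2)] akb(3)] .
      show "x \<in> U <#> (Um - {\<one>}) <#> U" unfolding S2 using xe m1 m2 v(1) by blast
    qed
    then show "U <#> (Um - {\<one>}) <#> U = U #> n1 <#> H <#> U" using sub23 by blast
  next
    assume E: "U <#> (Um - {\<one>}) <#> U = U #> n1 <#> H <#> U"
    show "\<forall>h\<in>H. (Um - {\<one>}) \<inter> (U #> (n1 \<otimes> h) <#> U) \<noteq> {}"
    proof
      fix h assume h: "h \<in> H"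
      have "n1 \<otimes> h \<in> U #> n1 <#> H <#> U" unfolding S3 using U1 h n1 Hc by (metis l_one r_one m_closed)
      then obtain a v b where ab: "a \<in> U" "b \<in> U" and v: "v \<in> Um - {\<one>}" and x: "n1 \<otimes> h = a \<otimes> v \<otimes> b"
        using S2 E by blast
      have "v = inv a \<otimes> (n1 \<otimes> h) \<otimes> inv b" using x ab v Uc Umc by (simp add: m_assoc)
      moreover have "inv a \<in> U" "inv b \<in> U" using Ui ab by auto
      ultimately have "v \<in> U #> (n1 \<otimes> h) <#> U" unfolding S1 by blast
      then show "(Um - {\<one>}) \<inter> (U #> (n1 \<otimes> h) <#> U) \<noteq> {}" using v by blast
    qed
  qed

  have S4c: "U <#> Um <#> U <#> Um \<subseteq> carrier G" using S4 Uc Umc by auto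
  have P2: "U <#> (Um - {\<one>}) <#> U = U #> n1 <#> H <#> U
           \<longleftrightarrow> carrier G = U <#> Um <#> U <#> Um"
  proof
    assume E: "U <#> (Um - {\<one>}) <#> U = U #> n1 <#> H <#> U"
    have "n1 \<in> U #> n1 <#> H <#> U" unfolding S3 using U1 n1 sH subgroup.one_closed by (metis l_one r_one one_closed)
    then obtain a0 v0 b0 where ab0: "a0 \<in> U" "b0 \<in> U" and v0: "v0 \<in> Um - {\<one>}" and x0: "n1 = a0 \<otimes> v0 \<otimes> b0"
      using S2 E by blast
    have "carrier G \<subseteq> U <#> Um <#> U <#> Um"
    proof
      fix g assume g: "g \<in> carrier G"
      show "g \<in> U <#> Um <#> U <#> Um"
      proof (cases "g \<in> H <#> U")
        case False
        then have "g \<in> U <#> (Um - {\<one>}) <#> U" using bruhat g E S3 by blast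
        then obtain a v b where ab: "a \<in> U" "b \<in> U" and v: "v \<in> Um - {\<one>}" and x: "g = a \<otimes> v \<otimes> b"
          using S2 by blast
        have "\<one> \<in> Um" unfolding memUm using U1 n1 by (metis l_inv r_one inv_closed)
        moreover have "g = a \<otimes> v \<otimes> b \<otimes> \<one>" using x ab v Uc Umc by simp
        ultimately show ?thesis unfolding S4 using ab v by blast
      next
        case True
        define g' where "g' = g \<otimes> inv v0"
        have v0c: "v0 \<in> carrier G" using v0 Umc by blast
        have "g' \<notin> H <#> U"
        proof
          assume "g' \<in> H <#> U"
          then have "inv g' \<otimes> g \<in> H <#> U" using True Bi Bm by blast
          moreover have "inv g' \<otimes> g = v0" unfolding g'_def using g v0c by (simp add: inv_mult_group m_assoc)
          ultimately show False using nonB v0 by blast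
        qed
        then have "g' \<in> U <#> (Um - {\<one>}) <#> U" using bruhat g v0c E S3 unfolding g'_def by blast
        then obtain a v b where ab: "a \<in> U" "b \<in> U" and v: "v \<in> Um - {\<one>}" and x: "g' = a \<otimes> v \<otimes> b"
          using S2 by blast
        have "g = a \<otimes> v \<otimes> b \<otimes> v0" using x ab v Uc Umc v0c g unfolding g'_def
          by (metis inv_solve_right m_closed inv_closed)
        then show ?thesis unfolding S4 using ab v v0 by blast
      qed
    qed
    then show "carrier G = U <#> Um <#> U <#> Um" using S4c by blast
  next
    assume C: "carrier G = U <#> Um <#> U <#> Um"
    have "\<forall>h\<in>H. (Um - {\<one>}) \<inter> (U #> (n1 \<otimes> h) <#> U) \<noteq> {}"
    proof
      fix h assume h: "h \<in> H"
      have hc: "h \<in> carrier G" using h Hc by blast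
      have "n1 \<otimes> h \<in> carrier G" using hc n1 by simp
      then obtain u1 v1 u2 v2 where u: "u1 \<in> U" "u2 \<in> U" and v: "v1 \<in> Um" "v2 \<in> Um"
         and x: "n1 \<otimes> h = u1 \<otimes> v1 \<otimes> u2 \<otimes> v2" using C S4 by blast
      obtain w where w: "w \<in> U" "v2 = inv n1 \<otimes> w \<otimes> n1" using memUm v by blast
      define t where "t = n1 \<otimes> h \<otimes> inv n1"
      have t: "t \<in> H" using nH2 h t_def by blast
      have tc: "t \<in> carrier G" using t Hc by blast
      have wc: "w \<in> carrier G" using w Uc by blast
      define w' where "w' = t \<otimes> inv w \<otimes> inv t"
      have w': "w' \<in> U" unfolding w'_def using hU t Ui w by blast
      have w'c: "w' \<in> carrier G" using w' Uc by blast
      have eq1: "n1 \<otimes> h \<otimes> inv v2 = w' \<otimes> n1 \<otimes> h"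
        unfolding w'_def t_def w(2) using n1 hc wc by (simp add: inv_mult_group m_assoc)
      have v1c: "v1 \<in> carrier G" "v2 \<in> carrier G" using v Umc by auto
      have eq2: "w' \<otimes> n1 \<otimes> h = u1 \<otimes> v1 \<otimes> u2"
        using eq1 x u v1c Uc by (simp add: m_assoc)
      have eq3: "v1 = inv u1 \<otimes> w' \<otimes> (n1 \<otimes> h) \<otimes> inv u2"
        using eq2 u v1c Uc w'c n1 hc by (simp add: m_assoc)
      have "inv u1 \<otimes> w' \<in> U" using Um'[OF Ui[OF u(1)] w'] .
      moreover have "inv u2 \<in> U" using Ui[OF u(2)] .
      ultimately have "v1 \<in> U #> (n1 \<otimes> h) <#> U" unfolding S1 using eq3 by blast
      moreover have "v1 \<noteq> \<one>"
      proof
        assume "v1 = \<one>"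
        then have e: "w' \<otimes> (n1 \<otimes> h) = u1 \<otimes> u2" using eq2 u Uc w'c n1 hc
          by (simp add: m_assoc)
        have "n1 = inv w' \<otimes> (w' \<otimes> (n1 \<otimes> h)) \<otimes> inv h" using w'c n1 hc by (simp add: m_assoc)
        then have "n1 = inv w' \<otimes> (u1 \<otimes> u2) \<otimes> inv h" using e by simp
        moreover have "inv w' \<otimes> (u1 \<otimes> u2) \<otimes> inv h \<in> H <#> U"
          using Bm[OF Bm[OF UB[OF Ui[OF w']] UB[OF Um'[OF u(1) u(2)]]] HB[OF subgroup.m_inv_closed[OF sH h]]] .
        ultimately show False using n1B by simp
      qed
      ultimately show "(Um - {\<one>}) \<inter> (U #> (n1 \<otimes> h) <#> U) \<noteq> {}" using v by blast
    qed
    then show "U <#> (Um - {\<one>}) <#> U = U #> n1 <#> H <#> U" using P1 by blast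
  qed
  show ?thesis using P1 P2 by blast
qed
end

theorem lemma5:
  fixes G (structure) and H U N :: "'a set" and n1 :: 'a
  assumes split: "split_BN_pair G H U N"
    and n1N: "n1 \<in> N"
    and n1H: "n1 \<notin> H"
    and W: "{n <# H | n. n \<in> N} = {H, n1 <# H}"
  defines "Um \<equiv> inv n1 <# U #> n1"
  shows "((\<forall>h\<in>H. (Um - {\<one>}) \<inter> (U #> (n1 \<otimes> h) <#> U) \<noteq> {})
           \<longleftrightarrow> U <#> (Um - {\<one>}) <#> U = U #> n1 <#> H <#> U)
       \<and> (U <#> (Um - {\<one>}) <#> U = U #> n1 <#> H <#> U
           \<longleftrightarrow> carrier G = U <#> Um <#> U <#> Um)"
proof -
  define B where "B = H <#> U"
  note sp = split[unfolded split_BN_pair_def, folded B_def]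
  note bn = conjunct1[OF sp]
  note sH = conjunct1[OF conjunct2[OF sp]]
  note sU = conjunct1[OF conjunct2[OF conjunct2[OF sp]]]
  note nU = conjunct1[OF conjunct2[OF conjunct2[OF conjunct2[OF sp]]]]
  note HU = conjunct1[OF conjunct2[OF conjunct2[OF conjunct2[OF conjunct2[OF sp]]]]]
  note HBN = conjunct1[OF conjunct2[OF conjunct2[OF conjunct2[OF conjunct2[OF conjunct2[OF sp]]]]]]
  note Int = conjunct2[OF conjunct2[OF conjunct2[OF conjunct2[OF conjunct2[OF conjunct2[OF sp]]]]]]
  note bns = bn[unfolded BN_pair_def, folded HBN]
  note grp = conjunct1[OF bns]
  note sB = conjunct1[OF conjunct2[OF bns]]
  note sN = conjunct1[OF conjunct2[OF conjunct2[OF bns]]]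
  note gen = conjunct1[OF conjunct2[OF conjunct2[OF conjunct2[OF bns]]]]
  note nH = conjunct1[OF conjunct2[OF conjunct2[OF conjunct2[OF conjunct2[OF bns]]]]]
  note Rex = conjunct2[OF conjunct2[OF conjunct2[OF conjunct2[OF conjunct2[OF bns]]]]]
  interpret group G by (rule grp)
  have Hc: "\<And>k. k \<in> H \<Longrightarrow> k \<in> carrier G" by (rule subgroup.mem_carrier[OF sH])
  have Uc: "\<And>k. k \<in> U \<Longrightarrow> k \<in> carrier G" by (rule subgroup.mem_carrier[OF sU])
  have Nc: "\<And>k. k \<in> N \<Longrightarrow> k \<in> carrier G" by (rule subgroup.mem_carrier[OF sN])
  have Bc: "\<And>k. k \<in> B \<Longrightarrow> k \<in> carrier G" by (rule subgroup.mem_carrier[OF sB])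
  have Bm: "\<And>x y. x \<in> B \<Longrightarrow> y \<in> B \<Longrightarrow> x \<otimes> y \<in> B" by (rule subgroup.m_closed[OF sB])
  have Bi: "\<And>x. x \<in> B \<Longrightarrow> inv x \<in> B" by (rule subgroup.m_inv_closed[OF sB])
  have Hm: "\<And>x y. x \<in> H \<Longrightarrow> y \<in> H \<Longrightarrow> x \<otimes> y \<in> H" by (rule subgroup.m_closed[OF sH])
  have Hi: "\<And>x. x \<in> H \<Longrightarrow> inv x \<in> H" by (rule subgroup.m_inv_closed[OF sH])
  have Nm: "\<And>x y. x \<in> N \<Longrightarrow> y \<in> N \<Longrightarrow> x \<otimes> y \<in> N" by (rule subgroup.m_closed[OF sN])
  have Ni: "\<And>x. x \<in> N \<Longrightarrow> inv x \<in> N" by (rule subgroup.m_inv_closed[OF sN])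
  have memB: "\<And>x. x \<in> B \<longleftrightarrow> (\<exists>k\<in>H. \<exists>u\<in>U. x = k \<otimes> u)" unfolding B_def by (rule mem_smult)
  have UB: "\<And>u. u \<in> U \<Longrightarrow> u \<in> B" using memB sH Uc subgroup.one_closed by fastforce
  have HB: "\<And>k. k \<in> H \<Longrightarrow> k \<in> B" using memB sU Hc subgroup.one_closed by fastforce
  have n1c: "n1 \<in> carrier G" using n1N Nc by blast
  have cosU: "\<forall>x\<in>B. U #> x = x <# U"
    using normal.coset_eq[OF nU] unfolding r_coset_def l_coset_def by simp
  have hU: "\<forall>k\<in>H. \<forall>u\<in>U. k \<otimes> u \<otimes> inv k \<in> U"
  proof (intro ballI)
    fix k u assume k: "k \<in> H" and u: "u \<in> U"
    have "k \<otimes> u \<in> U #> k" using cosU HB[OF k] u by (auto simp: mem_lcos)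
    then obtain u' where u': "u' \<in> U" "k \<otimes> u = u' \<otimes> k" by (auto simp: mem_rcos)
    then show "k \<otimes> u \<otimes> inv k \<in> U" using k u Hc Uc by (simp add: m_assoc)
  qed
  have cosH: "\<forall>x\<in>N. H #> x = x <# H"
    using normal.coset_eq[OF nH] unfolding r_coset_def l_coset_def by simp
  have nconj: "\<And>x k. x \<in> N \<Longrightarrow> k \<in> H \<Longrightarrow> x \<otimes> k \<otimes> inv x \<in> H"
  proof -
    fix x k assume x: "x \<in> N" and k: "k \<in> H"
    have "x \<otimes> k \<in> H #> x" using cosH x k by (auto simp: mem_lcos)
    then obtain k' where "k' \<in> H" "x \<otimes> k = k' \<otimes> x" by (auto simp: mem_rcos)
    then show "x \<otimes> k \<otimes> inv x \<in> H" using k x Hc Nc by (simp add: m_assoc)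
  qed
  have nH1: "\<forall>k\<in>H. inv n1 \<otimes> k \<otimes> n1 \<in> H" using nconj[of "inv n1"] Ni n1N n1c by simp
  have nH2: "\<forall>k\<in>H. n1 \<otimes> k \<otimes> inv n1 \<in> H" using nconj n1N by blast
  have n1B: "n1 \<notin> B" using n1N n1H HBN by blast
  have dich: "\<And>n. n \<in> N \<Longrightarrow> n \<in> H \<or> (\<exists>k\<in>H. n = n1 \<otimes> k)"
  proof -
    fix n assume n: "n \<in> N"
    have "n <# H \<in> {H, n1 <# H}" using W n by blast
    then have D: "n <# H = H \<or> n <# H = n1 <# H" by blast
    have "n = n \<otimes> \<one>" using n Nc by simp
    then have nn: "n \<in> n <# H" unfolding mem_lcos using subgroup.one_closed[OF sH] by blast
    from D show "n \<in> H \<or> (\<exists>k\<in>H. n = n1 \<otimes> k)"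
    proof
      assume "n <# H = H" then show ?thesis using nn by simp
    next
      assume "n <# H = n1 <# H" then have "n \<in> n1 <# H" using nn by simp
      then show ?thesis unfolding mem_lcos by blast
    qed
  qed
  have n11: "n1 \<otimes> n1 \<in> H"
  proof (rule ccontr)
    assume "n1 \<otimes> n1 \<notin> H"
    then obtain k where "k \<in> H" "n1 \<otimes> n1 = n1 \<otimes> k" using dich n1N Nm by blast
    then have "n1 = k" using n1c Hc by simp
    then show False using n1H \<open>k \<in> H\<close> by simp
  qed
  have UmB: "\<forall>u\<in>U. inv n1 \<otimes> u \<otimes> n1 \<in> B \<longrightarrow> u = \<one>"
  proof (intro ballI impI)
    fix u assume u: "u \<in> U" and vB: "inv n1 \<otimes> u \<otimes> n1 \<in> B"
    define v where "v = inv n1 \<otimes> u \<otimes> n1"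
    have vc: "v \<in> carrier G" using v_def u Uc n1c by simp
    have "v \<in> (\<Inter>n\<in>N. n <# B #> inv n)"
    proof
      fix n assume n: "n \<in> N"
      have nc: "n \<in> carrier G" using n Nc by blast
      have bB: "inv n \<otimes> v \<otimes> n \<in> B"
        using dich[OF n]
      proof
        assume nH: "n \<in> H"
        have "v \<in> B" using vB v_def by simp
        have "inv n \<otimes> v \<in> B" using Bm[OF Bi[OF HB[OF nH]] \<open>v \<in> B\<close>] .
        then show ?thesis by (rule Bm[OF _ HB[OF nH]])
      next
        assume "\<exists>k\<in>H. n = n1 \<otimes> k"
        then obtain k where k: "k \<in> H" "n = n1 \<otimes> k" by blast
        define c where "c = n1 \<otimes> n1 \<otimes> k"
        have c: "c \<in> H" using c_def n11 k Hm by blast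
        have cc: "c \<in> carrier G" using c Hc by blast
        have "inv n \<otimes> v \<otimes> n = inv c \<otimes> u \<otimes> inv (inv c)"
          unfolding v_def k(2) c_def using n1c u Uc k Hc by (simp add: inv_mult_group m_assoc)
        also have "\<dots> \<in> U" using hU Hi c u by blast
        finally show ?thesis using UB by blast
      qed
      have "v = n \<otimes> (inv n \<otimes> v \<otimes> n) \<otimes> inv n" using nc vc by (simp add: m_assoc)
      then show "v \<in> n <# B #> inv n" using bB unfolding mem_rcos Bex_def mem_lcos by blast
    qed
    then have "v \<in> H" using Int by simp
    then have "n1 \<otimes> v \<otimes> inv n1 \<in> H" using nH2 by blast
    moreover have "n1 \<otimes> v \<otimes> inv n1 = u" unfolding v_def using n1c u Uc by (simp add: m_assoc)
    ultimately show "u = \<one>" using HU u by blast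
  qed

  from Rex obtain R where R: "R \<subseteq> N" "generate G (R \<union> H) = N"
     and Rax: "\<forall>r\<in>R. r \<notin> H \<and> (\<forall>n\<in>N. r <# (B #> n) \<subseteq> (B #> n <#> B) \<union> (B #> (r \<otimes> n) <#> B))"
    by blast
  have "R \<noteq> {}"
  proof
    assume "R = {}"
    then have "generate G H = N" using R by simp
    moreover have "generate G H \<subseteq> H" using generate_subgroup_incl[OF _ sH] by blast
    ultimately show False using n1N n1H by blast
  qed
  then obtain r where r: "r \<in> R" by blast
  have rN: "r \<in> N" and rH: "r \<notin> H" and rax: "r <# (B #> n1) \<subseteq> (B #> n1 <#> B) \<union> (B #> (r \<otimes> n1) <#> B)"
    using r R Rax n1N by auto
  obtain h0 where h0: "h0 \<in> H" "r = n1 \<otimes> h0" using dich[OF rN] rH by blast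
  have rc: "r \<in> carrier G" using rN Nc by blast
  have rn1: "r \<otimes> n1 \<in> H"
  proof (rule ccontr)
    assume "r \<otimes> n1 \<notin> H"
    then obtain k where k: "k \<in> H" "r \<otimes> n1 = n1 \<otimes> k" using dich rN n1N Nm by blast
    then have "r = n1 \<otimes> k \<otimes> inv n1" using rc n1c Hc by (metis inv_solve_right m_closed)
    then show False using nH2 k rH by auto
  qed
  define T where "T = {x. \<exists>b1\<in>B. \<exists>b2\<in>B. x = b1 \<otimes> n1 \<otimes> b2}"
  define S where "S = B \<union> T"
  have Sc: "\<And>s. s \<in> S \<Longrightarrow> s \<in> carrier G" unfolding S_def T_def using Bc n1c by auto
  have BS: "\<And>x s. x \<in> B \<Longrightarrow> s \<in> S \<Longrightarrow> x \<otimes> s \<in> S"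
  proof -
    fix x s assume x: "x \<in> B" and s: "s \<in> S"
    show "x \<otimes> s \<in> S"
    proof (cases "s \<in> B")
      case True then show ?thesis using Bm x S_def by blast
    next
      case False
      then obtain b1 b2 where b: "b1 \<in> B" "b2 \<in> B" "s = b1 \<otimes> n1 \<otimes> b2" using s S_def T_def by blast
      then have "x \<otimes> s = (x \<otimes> b1) \<otimes> n1 \<otimes> b2" using x Bc n1c by (simp add: m_assoc)
      then show ?thesis using Bm x b unfolding S_def T_def by blast
    qed
  qed
  have n1S: "\<And>s. s \<in> S \<Longrightarrow> n1 \<otimes> s \<in> S"
  proof -
    fix s assume s: "s \<in> S"
    show "n1 \<otimes> s \<in> S"
    proof (cases "s \<in> B")
      case True
      have "n1 \<otimes> s = \<one> \<otimes> n1 \<otimes> s" using n1c Bc True by simp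
      then show ?thesis using True sB subgroup.one_closed unfolding S_def T_def by blast
    next
      case False
      then obtain b1 b2 where b: "b1 \<in> B" "b2 \<in> B" "s = b1 \<otimes> n1 \<otimes> b2" using s S_def T_def by blast
      have b1c: "b1 \<in> carrier G" "b2 \<in> carrier G" using b Bc by auto
      have h0c: "h0 \<in> carrier G" using h0 Hc by blast
      have "n1 \<otimes> b1 \<otimes> n1 = r \<otimes> ((inv h0 \<otimes> b1) \<otimes> n1)"
        using h0 b1c n1c h0c by (simp add: m_assoc)
      moreover have "inv h0 \<otimes> b1 \<in> B" using h0 HB Bi Bm b by blast
      ultimately have "n1 \<otimes> b1 \<otimes> n1 \<in> r <# (B #> n1)" unfolding mem_lcos Bex_def mem_rcos by blast
      then have "n1 \<otimes> b1 \<otimes> n1 \<in> (B #> n1 <#> B) \<union> (B #> (r \<otimes> n1) <#> B)" using rax by blast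
      then have "n1 \<otimes> b1 \<otimes> n1 \<in> S"
      proof
        assume "n1 \<otimes> b1 \<otimes> n1 \<in> B #> n1 <#> B"
        then obtain y b where "y \<in> B" "b \<in> B" "n1 \<otimes> b1 \<otimes> n1 = y \<otimes> n1 \<otimes> b"
          unfolding mem_smult Bex_def mem_rcos by blast
        then show ?thesis unfolding S_def T_def by blast
      next
        assume "n1 \<otimes> b1 \<otimes> n1 \<in> B #> (r \<otimes> n1) <#> B"
        then obtain y b where yb: "y \<in> B" "b \<in> B" "n1 \<otimes> b1 \<otimes> n1 = y \<otimes> (r \<otimes> n1) \<otimes> b"
          unfolding mem_smult Bex_def mem_rcos by blast
        have "y \<otimes> (r \<otimes> n1) \<otimes> b \<in> B" using Bm[OF Bm[OF yb(1) HB[OF rn1]] yb(2)] .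
        then show ?thesis using yb(3) unfolding S_def by simp
      qed
      moreover have "n1 \<otimes> s = (n1 \<otimes> b1 \<otimes> n1) \<otimes> b2" using b b1c n1c by (simp add: m_assoc)
      moreover have "\<And>z. z \<in> S \<Longrightarrow> z \<otimes> b2 \<in> S"
      proof -
        fix z assume z: "z \<in> S"
        show "z \<otimes> b2 \<in> S"
        proof (cases "z \<in> B")
          case True then show ?thesis using Bm b S_def by blast
        next
          case False
          then obtain c1 c2 where c: "c1 \<in> B" "c2 \<in> B" "z = c1 \<otimes> n1 \<otimes> c2" using z S_def T_def by blast
          then have "z \<otimes> b2 = c1 \<otimes> n1 \<otimes> (c2 \<otimes> b2)" using Bc n1c b1c by (simp add: m_assoc)
          then show ?thesis using Bm b c unfolding S_def T_def by blast
        qed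
      qed
      ultimately show ?thesis by metis
    qed
  qed
  have gS: "\<And>x s. x \<in> B \<union> N \<Longrightarrow> s \<in> S \<Longrightarrow> x \<otimes> s \<in> S"
  proof -
    fix x s assume x: "x \<in> B \<union> N" and s: "s \<in> S"
    show "x \<otimes> s \<in> S"
    proof (cases "x \<in> B")
      case True then show ?thesis using BS s by blast
    next
      case False
      then have "x \<in> N" using x by blast
      then obtain k where k: "k \<in> H" "x = n1 \<otimes> k" using dich False HB by blast
      then have "x \<otimes> s = n1 \<otimes> (k \<otimes> s)" using n1c Hc Sc s by (simp add: m_assoc)
      then show ?thesis using n1S BS HB k s by metis
    qed
  qed
  have genS: "\<And>g. g \<in> generate G (B \<union> N) \<Longrightarrow> \<forall>s\<in>S. g \<otimes> s \<in> S"
  proof -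
    fix g assume "g \<in> generate G (B \<union> N)"
    then show "\<forall>s\<in>S. g \<otimes> s \<in> S"
    proof (induction)
      case one then show ?case using Sc by simp
    next
      case (incl h) then show ?case using gS by blast
    next
      case (inv h)
      then have "inv h \<in> B \<union> N" using Bi Ni by blast
      then show ?case using gS by blast
    next
      case (eng h1 h2)
      have "h1 \<in> carrier G" "h2 \<in> carrier G"
        using eng.hyps generate_in_carrier[of "B \<union> N"] Bc Nc by blast+
      then show ?case using eng.IH Sc by (simp add: m_assoc)
    qed
  qed
  have bruhat: "\<forall>g\<in>carrier G. g \<in> H <#> U \<or> (\<exists>a\<in>U. \<exists>k\<in>H. \<exists>b\<in>U. g = a \<otimes> n1 \<otimes> k \<otimes> b)"
  proof
    fix g assume g: "g \<in> carrier G"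
    have "\<one> \<in> S" using subgroup.one_closed[OF sB] S_def by blast
    then have "g \<in> S" using genS gen g by (metis r_one)
    then have "g \<in> B \<or> g \<in> T" unfolding S_def by blast
    then show "g \<in> H <#> U \<or> (\<exists>a\<in>U. \<exists>k\<in>H. \<exists>b\<in>U. g = a \<otimes> n1 \<otimes> k \<otimes> b)"
    proof
      assume "g \<in> B" then show ?thesis using B_def by blast
    next
      assume "g \<in> T"
      then obtain b1 b2 where bb: "b1 \<in> B" "b2 \<in> B" "g = b1 \<otimes> n1 \<otimes> b2" using T_def by blast
      obtain k1 u1 where k1: "k1 \<in> H" "u1 \<in> U" "b1 = k1 \<otimes> u1" using memB bb(1) by blast
      obtain k2 u2 where k2: "k2 \<in> H" "u2 \<in> U" "b2 = k2 \<otimes> u2" using memB bb(2) by blast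
      have k: "k1 \<in> H" "u1 \<in> U" "k2 \<in> H" "u2 \<in> U" using k1 k2 by auto
      have g': "g = k1 \<otimes> u1 \<otimes> n1 \<otimes> (k2 \<otimes> u2)" using bb(3) k1(3) k2(3) by simp
      have c: "k1 \<in> carrier G" "u1 \<in> carrier G" "k2 \<in> carrier G" "u2 \<in> carrier G" using k Hc Uc by auto
      have "g = (k1 \<otimes> u1 \<otimes> inv k1) \<otimes> n1 \<otimes> ((inv n1 \<otimes> k1 \<otimes> n1) \<otimes> k2) \<otimes> u2"
        using g' c n1c by (simp add: m_assoc)
      moreover have "k1 \<otimes> u1 \<otimes> inv k1 \<in> U" using hU k by blast
      moreover have "(inv n1 \<otimes> k1 \<otimes> n1) \<otimes> k2 \<in> H" using nH1 k Hm by blast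
      ultimately show ?thesis using k by blast
    qed
  qed
  show ?thesis
    by (rule core[OF sH sU sB[unfolded B_def] hU HU n1c n1B[unfolded B_def] nH1 nH2
          UmB[unfolded B_def] bruhat Um_def[THEN meta_eq_to_obj_eq]])
qed
end
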